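(* Assume, in the setting described in the context, the saturation assumption: there is a fixed $b_0\in(0,1)$ and a number $b_h<b_0$ such that $$|J(u)-J(u_h^{(2)})| < b_h\,|J(u)-J(\tilde u)|.$$ Then the computable error estimator $\eta^{(2)}$ satisfies $$\underline{c}_h|\eta^{(2)}| \le |J(u)-J(\tilde u)| \le \overline{c}_h|\eta^{(2)}| \quad\text{and}\quad \underline{c}|\eta^{(2)}| \le |J(u)-J(\tilde u)| \le \overline{c}|\eta^{(2)}|,$$ with the positive constants $\underline{c}_h:=1/(1+b_h)$, $\overline{c}_h:=1/(1-b_h)$, $\underline{c}:=1/(1+b_0)$, $\overline{c}:=1/(1-b_0)$.
   Context: Let $U$ and $V$ be real Banach spaces with dual $V^*$. Let $\mathcal{A}:U\to V^*$ be a (nonlinear) operator that is three times continuously Fréchet differentiable, and let $J:U\to\mathbb{R}$ be three times continuously Fréchet differentiable. Notation: $\mathcal{A}(w)(v)$ is the value of $\mathcal{A}(w)\in V^*$ at $v\in V$. For fixed $v$, $\mathcal{A}'(w)(\varphi,v)$, $\mathcal{A}''(w)(\varphi,\psi,v)$ and $\mathcal{A}'''(w)(\varphi,\psi,\chi,v)$ denote the first, second and third Fréchet derivatives of $w\mapsto\mathcal{A}(w)(v)$ at $w$ in the directions $\varphi,\psi,\chi\in U$. Analogously, $J'(w)(\varphi)$ and $J'''(w)(\varphi,\psi,\chi)$ denote derivatives of $J$. Let $u\in U$ satisfy $\mathcal{A}(u)(v)=0$ for all $v\in V$, and let $z\in V$ satisfy $\mathcal{A}'(u)(\varphi,z)=J'(u)(\varphi)$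 for all $\varphi\in U$. Let $U_h^{(2)}\subset U$ and $V_h^{(2)}\subset V$ be finite-dimensional subspaces (enriched spaces). Let $u_h^{(2)}\in U_h^{(2)}$ satisfy $\mathcal{A}(u_h^{(2)})(v)=0$ for all $v\in V_h^{(2)}$. Let $z_h^{(2)}\in V_h^{(2)}$ satisfy $\mathcal{A}'(u_h^{(2)})(\varphi,z_h^{(2)})=J'(u_h^{(2)})(\varphi)$ for all $\varphi\in U_h^{(2)}$. Let $\tilde u\in U_h^{(2)}$ and $\tilde z\in V_h^{(2)}$ be arbitrary fixed elements. Define $\rho(\tilde u)(v):=-\mathcal{A}(\tilde u)(v)$ and $\rho^*(\tilde u,\tilde z)(\varphi):=J'(\tilde u)(\varphi)-\mathcal{A}'(\tilde u)(\varphi,\tilde z)$. With $e^{(2)}:=u_h^{(2)}-\tilde u$ and $e^{(2),*}:=z_h^{(2)}-\tilde z$, define $$\mathcal{R}^{(3)(2)}:=\frac12\int_0^1\Big[J'''(\tilde u+se^{(2)})(e^{(2)},e^{(2)},e^{(2)})-\mathcal{A}'''(\tilde u+se^{(2)})(e^{(2)},e^{(2)},e^{(2)},\tilde z+se^{(2),*})-3\mathcal{A}''(\tilde u+se^{(2)})(e^{(2)},e^{(2)},e^{(2),*})\Big]s(s-1)\,ds,$$ and the computable error estimator $$\eta^{(2)}:=\tfrac12\rho(\tilde u)(z_h^{(2)}-\tilde z)+\tfrac12\rho^*(\tilde u,\tilde z)(u_h^{(2)}-\tilde u)+\rho(\tilde u)(\tilde z)+\mathcal{R}^{(3)(2)}.$$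 *)

theory Defs
  imports "HOL-Analysis.Analysis"
begin

(* V* is modelled as 'v =>L real (bounded linear functionals). Frechet derivatives
   are iterated bounded linear maps: A1 w phi v = A'(w)(phi,v), A2 w phi psi v = A''(w)(phi,psi,v),
   A3 w phi psi chi v = A'''(w)(phi,psi,chi,v); similarly J1, J2, J3 for J. *)

definition fin_dim_subspace :: "'a::real_vector set \<Rightarrow> bool" where
  "fin_dim_subspace S \<longleftrightarrow> subspace S \<and> (\<exists>B. finite B \<and> S = span B)"

definition rho :: "('u \<Rightarrow> ('v::real_normed_vector \<Rightarrow>\<^sub>L real)) \<Rightarrow> 'u \<Rightarrow> 'v \<Rightarrow> real" where
  "rho A ut v = - blinfun_apply (A ut) v"

definition rho_star ::
  "('u::real_normed_vector \<Rightarrow> ('u \<Rightarrow>\<^sub>L real)) \<Rightarrow> ('u \<Rightarrow> ('u \<Rightarrow>\<^sub>L ('v::real_normed_vector \<Rightarrow>\<^sub>L real))) \<Rightarrow> 'u \<Rightarrow> 'v \<Rightarrow> 'u \<Rightarrow> real" where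
  "rho_star J1 A1 ut zt phi = blinfun_apply (J1 ut) phi - blinfun_apply (blinfun_apply (A1 ut) phi) zt"

definition R32 ::
  "('u::real_normed_vector \<Rightarrow> ('u \<Rightarrow>\<^sub>L ('u \<Rightarrow>\<^sub>L ('u \<Rightarrow>\<^sub>L real)))) \<Rightarrow>
   ('u \<Rightarrow> ('u \<Rightarrow>\<^sub>L ('u \<Rightarrow>\<^sub>L ('v::real_normed_vector \<Rightarrow>\<^sub>L real)))) \<Rightarrow>
   ('u \<Rightarrow> ('u \<Rightarrow>\<^sub>L ('u \<Rightarrow>\<^sub>L ('u \<Rightarrow>\<^sub>L ('v \<Rightarrow>\<^sub>L real))))) \<Rightarrow>
   'u \<Rightarrow> 'v \<Rightarrow> 'u \<Rightarrow> 'v \<Rightarrow> real" where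
  "R32 J3 A2 A3 ut zt uh zh =
    (let e = uh - ut; es = zh - zt in
     (1/2) * integral {0..1} (\<lambda>s::real.
        (blinfun_apply (blinfun_apply (blinfun_apply (J3 (ut + s *\<^sub>R e)) e) e) e
         - blinfun_apply (blinfun_apply (blinfun_apply (blinfun_apply (A3 (ut + s *\<^sub>R e)) e) e) e) (zt + s *\<^sub>R es)
         - 3 * blinfun_apply (blinfun_apply (blinfun_apply (A2 (ut + s *\<^sub>R e)) e) e) es)
        * (s * (s - 1))))"

definition eta2 where
  "eta2 A A1 A2 A3 J1 J3 ut zt uh zh =
     (1/2) * rho A ut (zh - zt) + (1/2) * rho_star J1 A1 ut zt (uh - ut)
     + rho A ut zt + R32 J3 A2 A3 ut zt uh zh"

end

theory Submission
  imports Defs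
begin


lemma vd_comp:
  fixes F :: "'u::real_normed_vector \<Rightarrow> 'b::real_normed_vector"
  assumes "\<And>w. (F has_derivative blinfun_apply (F' w)) (at w)"
  shows "((\<lambda>s. F (a + s *\<^sub>R e)) has_vector_derivative blinfun_apply (F' (a + s *\<^sub>R e)) e) (at s)"
proof -
  have 1: "((\<lambda>s. a + s *\<^sub>R e) has_derivative (\<lambda>h. h *\<^sub>R e)) (at s)"
    by (auto intro!: derivative_eq_intros)
  have "((F \<circ> (\<lambda>s. a + s *\<^sub>R e)) has_derivative (blinfun_apply (F' (a + s *\<^sub>R e)) \<circ> (\<lambda>h. h *\<^sub>R e))) (at s)"
    by (rule diff_chain_at[OF 1 assms])
  then show ?thesis
    unfolding has_vector_derivative_def by (simp add: o_def blinfun.scaleR_right)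
qed

lemma vd_apply:
  fixes P :: "real \<Rightarrow> ('a::real_normed_vector \<Rightarrow>\<^sub>L 'b::real_normed_vector)"
  assumes "(P has_vector_derivative P') (at s)" "(q has_vector_derivative q') (at s)"
  shows "((\<lambda>s. blinfun_apply (P s) (q s)) has_vector_derivative
          (blinfun_apply (P s) q' + blinfun_apply P' (q s))) (at s)"
proof -
  have "((\<lambda>s. blinfun_apply (P s) (q s)) has_derivative
     (\<lambda>h. blinfun_apply (P s) (h *\<^sub>R q') + blinfun_apply (h *\<^sub>R P') (q s))) (at s)"
    by (rule blinfun.FDERIV[OF assms[unfolded has_vector_derivative_def]])
  then show ?thesis unfolding has_vector_derivative_def
    by (simp add: blinfun.scaleR_right blinfun.scaleR_left scaleR_add_right)
qed

lemma vd_apply_const: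
  fixes P :: "real \<Rightarrow> ('a::real_normed_vector \<Rightarrow>\<^sub>L 'b::real_normed_vector)"
  assumes "(P has_vector_derivative P') (at s)"
  shows "((\<lambda>s. blinfun_apply (P s) c) has_vector_derivative blinfun_apply P' c) (at s)"
  using vd_apply[OF assms has_vector_derivative_const[of c]] by simp



theorem mainTheorem1:
  fixes A :: "'u::banach \<Rightarrow> ('v::banach \<Rightarrow>\<^sub>L real)"
    and A1 :: "'u \<Rightarrow> ('u \<Rightarrow>\<^sub>L ('v \<Rightarrow>\<^sub>L real))"
    and A2 :: "'u \<Rightarrow> ('u \<Rightarrow>\<^sub>L ('u \<Rightarrow>\<^sub>L ('v \<Rightarrow>\<^sub>L real)))"
    and A3 :: "'u \<Rightarrow> ('u \<Rightarrow>\<^sub>L ('u \<Rightarrow>\<^sub>L ('u \<Rightarrow>\<^sub>L ('v \<Rightarrow>\<^sub>L real))))"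
    and J :: "'u \<Rightarrow> real"
    and J1 :: "'u \<Rightarrow> ('u \<Rightarrow>\<^sub>L real)"
    and J2 :: "'u \<Rightarrow> ('u \<Rightarrow>\<^sub>L ('u \<Rightarrow>\<^sub>L real))"
    and J3 :: "'u \<Rightarrow> ('u \<Rightarrow>\<^sub>L ('u \<Rightarrow>\<^sub>L ('u \<Rightarrow>\<^sub>L real)))"
    and u ut uh :: 'u and z zt zh :: 'v
    and Uh :: "'u set" and Vh :: "'v set"
    and b0 bh :: real
  assumes dA: "\<And>w. (A has_derivative blinfun_apply (A1 w)) (at w)"
    and dA1: "\<And>w. (A1 has_derivative blinfun_apply (A2 w)) (at w)"
    and dA2: "\<And>w. (A2 has_derivative blinfun_apply (A3 w)) (at w)"
    and cA3: "continuous_on UNIV A3"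
    and dJ: "\<And>w. (J has_derivative blinfun_apply (J1 w)) (at w)"
    and dJ1: "\<And>w. (J1 has_derivative blinfun_apply (J2 w)) (at w)"
    and dJ2: "\<And>w. (J2 has_derivative blinfun_apply (J3 w)) (at w)"
    and cJ3: "continuous_on UNIV J3"
    and primal: "\<And>v. blinfun_apply (A u) v = 0"
    and adjoint: "\<And>\<phi>. blinfun_apply (blinfun_apply (A1 u) \<phi>) z = blinfun_apply (J1 u) \<phi>"
    and Uh_fd: "fin_dim_subspace Uh" and Vh_fd: "fin_dim_subspace Vh"
    and uh_in: "uh \<in> Uh"
    and primal_h: "\<And>v. v \<in> Vh \<Longrightarrow> blinfun_apply (A uh) v = 0"
    and zh_in: "zh \<in> Vh"
    and adjoint_h: "\<And>\<phi>. \<phi> \<in> Uh \<Longrightarrow>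
        blinfun_apply (blinfun_apply (A1 uh) \<phi>) zh = blinfun_apply (J1 uh) \<phi>"
    and ut_in: "ut \<in> Uh" and zt_in: "zt \<in> Vh"
    and b0: "0 < b0" "b0 < 1" and bh: "bh < b0"
    and sat: "\<bar>J u - J uh\<bar> < bh * \<bar>J u - J ut\<bar>"
  shows "(1 / (1 + bh)) * \<bar>eta2 A A1 A2 A3 J1 J3 ut zt uh zh\<bar> \<le> \<bar>J u - J ut\<bar>
       \<and> \<bar>J u - J ut\<bar> \<le> (1 / (1 - bh)) * \<bar>eta2 A A1 A2 A3 J1 J3 ut zt uh zh\<bar>
       \<and> (1 / (1 + b0)) * \<bar>eta2 A A1 A2 A3 J1 J3 ut zt uh zh\<bar> \<le> \<bar>J u - J ut\<bar>
       \<and> \<bar>J u - J ut\<bar> \<le> (1 / (1 - b0)) * \<bar>eta2 A A1 A2 A3 J1 J3 ut zt uh zh\<bar>"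
  proof -
  define eu where "eu = uh - ut"
  define ez where "ez = zh - zt"
  define x where "x = (\<lambda>s::real. ut + s *\<^sub>R eu)"
  define y where "y = (\<lambda>s::real. zt + s *\<^sub>R ez)"
  have subU: "subspace Uh" and subV: "subspace Vh" using Uh_fd Vh_fd by (auto simp: fin_dim_subspace_def)
  have eu_in: "eu \<in> Uh" unfolding eu_def using subU uh_in ut_in by (simp add: subspace_diff)
  have ez_in: "ez \<in> Vh" unfolding ez_def using subV zh_in zt_in by (simp add: subspace_diff)
  define f where "f = (\<lambda>s. J (x s) - blinfun_apply (A (x s)) (y s))"
  define f1 where "f1 = (\<lambda>s. blinfun_apply (J1 (x s)) eu - blinfun_apply (A (x s)) ez
      - blinfun_apply (blinfun_apply (A1 (x s)) eu) (y s))"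
  define f2 where "f2 = (\<lambda>s. blinfun_apply (blinfun_apply (J2 (x s)) eu) eu
      - 2 * blinfun_apply (blinfun_apply (A1 (x s)) eu) ez
      - blinfun_apply (blinfun_apply (blinfun_apply (A2 (x s)) eu) eu) (y s))"
  define f3 where "f3 = (\<lambda>s. blinfun_apply (blinfun_apply (blinfun_apply (J3 (x s)) eu) eu) eu
         - blinfun_apply (blinfun_apply (blinfun_apply (blinfun_apply (A3 (x s)) eu) eu) eu) (y s)
         - 3 * blinfun_apply (blinfun_apply (blinfun_apply (A2 (x s)) eu) eu) ez)"
  have dy: "(y has_vector_derivative ez) (at s)" for s
    unfolding y_def by (auto intro!: derivative_eq_intros)
  have df: "(f has_vector_derivative f1 s) (at s)" for s
  proof -
    have "(f has_vector_derivative (blinfun_apply (J1 (x s)) eu -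
       (blinfun_apply (A (x s)) ez + blinfun_apply (blinfun_apply (A1 (x s)) eu) (y s)))) (at s)"
      unfolding f_def
      by (intro has_vector_derivative_diff vd_apply dy; unfold x_def; rule vd_comp; fact)
    then show ?thesis unfolding f1_def by (simp add: algebra_simps)
  qed
  have df1: "(f1 has_vector_derivative f2 s) (at s)" for s
  proof -
    have "(f1 has_vector_derivative (blinfun_apply (blinfun_apply (J2 (x s)) eu) eu -
       blinfun_apply (blinfun_apply (A1 (x s)) eu) ez -
       (blinfun_apply (blinfun_apply (A1 (x s)) eu) ez + blinfun_apply (blinfun_apply (blinfun_apply (A2 (x s)) eu) eu) (y s)))) (at s)"
      unfolding f1_def
      by (intro has_vector_derivative_diff vd_apply vd_apply_const dy; unfold x_def; rule vd_comp; fact)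
    then show ?thesis unfolding f2_def by (simp add: algebra_simps)
  qed
  have df2: "(f2 has_vector_derivative f3 s) (at s)" for s
  proof -
    have "(f2 has_vector_derivative (blinfun_apply (blinfun_apply (blinfun_apply (J3 (x s)) eu) eu) eu -
       2 * blinfun_apply (blinfun_apply (blinfun_apply (A2 (x s)) eu) eu) ez -
       (blinfun_apply (blinfun_apply (blinfun_apply (A2 (x s)) eu) eu) ez + blinfun_apply (blinfun_apply (blinfun_apply (blinfun_apply (A3 (x s)) eu) eu) eu) (y s)))) (at s)"
      unfolding f2_def
      by (intro has_vector_derivative_diff has_vector_derivative_mult_right vd_apply vd_apply_const dy; unfold x_def; rule vd_comp; fact)
    then show ?thesis unfolding f3_def by (simp add: algebra_simps)
  qed
  define H where "H = (\<lambda>s. 2 * f s - f1 s * (2 * s - 1) + f2 s * (s * (s - 1)))"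
  have dH: "(H has_vector_derivative (f3 s * (s * (s - 1)))) (at s)" for s
  proof -
    have a: "(f has_real_derivative f1 s) (at s)" "(f1 has_real_derivative f2 s) (at s)"
      "(f2 has_real_derivative f3 s) (at s)"
      using df df1 df2 by (simp_all add: has_real_derivative_iff_has_vector_derivative)
    have "(H has_real_derivative (2 * f1 s - (f2 s * (2 * s - 1) + f1 s * 2) + (f3 s * (s * (s - 1)) + f2 s * (2 * s - 1)))) (at s)"
      unfolding H_def by (auto intro!: derivative_eq_intros a)
    then show ?thesis by (simp add: has_real_derivative_iff_has_vector_derivative algebra_simps)
  qed
  have int: "((\<lambda>s. f3 s * (s * (s - 1))) has_integral (H 1 - H 0)) {0..1}"
    by (rule fundamental_theorem_of_calculus) (auto intro: has_vector_derivative_at_within dH)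
  have R: "R32 J3 A2 A3 ut zt uh zh = (1/2) * (H 1 - H 0)"
    unfolding R32_def Let_def eu_def[symmetric] ez_def[symmetric]
    using integral_unique[OF int] by (simp add: f3_def x_def y_def)
  have x0: "x 0 = ut" and x1: "x 1 = uh" and y0: "y 0 = zt" and y1: "y 1 = zh"
    by (simp_all add: x_def y_def eu_def ez_def)
  have f1_1: "f1 1 = 0"
    using adjoint_h[OF eu_in] primal_h[OF ez_in] by (simp add: f1_def x1 y1)
  have eq: "eta2 A A1 A2 A3 J1 J3 ut zt uh zh = J uh - J ut"
    unfolding eta2_def R H_def
    using f1_1 primal_h[OF zh_in]
    by (simp add: f_def f1_def x0 x1 y0 y1 rho_def rho_star_def eu_def[symmetric] ez_def[symmetric] algebra_simps)
  define E where "E = J u - J ut"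
  define d where "d = J u - J uh"
  have et: "eta2 A A1 A2 A3 J1 J3 ut zt uh zh = E - d" using eq by (simp add: E_def d_def)
  have s: "\<bar>d\<bar> < bh * \<bar>E\<bar>" using sat by (simp add: E_def d_def)
  have Ep: "0 < \<bar>E\<bar>" using s
    by (cases "E = 0") auto
  have bhp: "0 < bh" using s Ep
    by (metis abs_ge_zero le_less_trans zero_less_mult_pos2)
  have i1: "\<bar>E - d\<bar> \<le> (1 + bh) * \<bar>E\<bar>" using s by (auto simp: algebra_simps)
  have i2: "(1 - bh) * \<bar>E\<bar> \<le> \<bar>E - d\<bar>" using s by (auto simp: algebra_simps)
  have i3: "\<bar>E - d\<bar> \<le> (1 + b0) * \<bar>E\<bar>" using i1 bh Ep
    by (smt (verit) mult_right_mono)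
  have i4: "(1 - b0) * \<bar>E\<bar> \<le> \<bar>E - d\<bar>" using i2 bh Ep
    by (smt (verit) mult_right_mono)
  show ?thesis unfolding et E_def[symmetric]
    using i1 i2 i3 i4 bhp bh b0
    by (auto simp: field_simps)
qed

end
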